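(* Let $G$ be an edge-maximal $K_{3,3}$-minor free graph of order $n\geq 1186$ with $\Delta(G)=n-1$ and $\Delta'(G)\leq n-2$. Then $q(G)\leq n+2$.
   Context: All graphs are finite, simple and undirected. $q(G)$ is the largest eigenvalue of the signless Laplacian matrix $Q(G)=D(G)+A(G)$. $\Delta(G)$ is the maximum degree of $G$, and $\Delta'(G)$ is the second largest degree: $\Delta'(G)=\max\{d(u): u\in V(G)\setminus\{v\}\}$ where $v$ is a vertex with $d(v)=\Delta(G)$. A graph $H$ is a minor of $G$ if $H$ can be obtained from $G$ by deleting edges, contracting edges, or deleting vertices; $G$ is $H$-minor free if it has no minor isomorphic to $H$. $G$ is edge-maximal $H$-minor free if $G$ is $H$-minor free and adding any edge joining two nonadjacent vertices of $G$ produces a graph having $H$ as a minor. $K_{3,3}$ is the complete bipartite graph with both parts of size 3. *)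

theory Defs
  imports Complex_Main
begin

type_synonym 'a graph = "'a set \<times> 'a set set"

definition verts :: "'a graph \<Rightarrow> 'a set" where "verts G = fst G"
definition edges :: "'a graph \<Rightarrow> 'a set set" where "edges G = snd G"

definition simple_graph :: "'a graph \<Rightarrow> bool" where
  "simple_graph G \<longleftrightarrow> finite (verts G) \<and>
     (\<forall>e\<in>edges G. \<exists>u v. u \<noteq> v \<and> u \<in> verts G \<and> v \<in> verts G \<and> e = {u, v})"

definition nbrs :: "'a graph \<Rightarrow> 'a \<Rightarrow> 'a set" where
  "nbrs G v = {w \<in> verts G. {v, w} \<in> edges G}"

definition deg :: "'a graph \<Rightarrow> 'a \<Rightarrow> nat" where
  "deg G v = card (nbrs G v)"

definition max_degree :: "'a graph \<Rightarrow> nat" where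
  "max_degree G = Max (deg G ` verts G)"

definition second_max_degree :: "'a graph \<Rightarrow> nat" where
  "second_max_degree G =
     (let v = (SOME v. v \<in> verts G \<and> deg G v = max_degree G)
      in Max (deg G ` (verts G - {v})))"

text \<open>Eigenvalues of the signless Laplacian Q(G) = D(G) + A(G), acting on
real vectors indexed by V(G); q(G) is the largest one.\<close>
definition Q_eigenvalue :: "'a graph \<Rightarrow> real \<Rightarrow> bool" where
  "Q_eigenvalue G \<mu> \<longleftrightarrow> (\<exists>x :: 'a \<Rightarrow> real. (\<exists>v\<in>verts G. x v \<noteq> 0) \<and>
     (\<forall>v\<in>verts G. real (deg G v) * x v + (\<Sum>w\<in>nbrs G v. x w) = \<mu> * x v))"

definition signless_q :: "'a graph \<Rightarrow> real" where
  "signless_q G = Max {\<mu>. Q_eigenvalue G \<mu>}"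

inductive minor_step :: "'a graph \<Rightarrow> 'a graph \<Rightarrow> bool" where
  del_edge: "e \<in> edges G \<Longrightarrow> minor_step G (verts G, edges G - {e})"
| del_vertex: "v \<in> verts G \<Longrightarrow>
     minor_step G (verts G - {v}, {e \<in> edges G. v \<notin> e})"
| contract: "{u, v} \<in> edges G \<Longrightarrow> u \<noteq> v \<Longrightarrow>
     minor_step G (verts G - {v},
       {e \<in> edges G. v \<notin> e} \<union> {{u, w} | w. {v, w} \<in> edges G \<and> w \<noteq> u})"

definition graph_iso :: "'a graph \<Rightarrow> 'b graph \<Rightarrow> bool" where
  "graph_iso G H \<longleftrightarrow> (\<exists>f. bij_betw f (verts G) (verts H) \<and>
     (\<forall>x\<in>verts G. \<forall>y\<in>verts G. {x, y} \<in> edges G \<longleftrightarrow> {f x, f y} \<in> edges H))"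

definition has_minor :: "'a graph \<Rightarrow> 'b graph \<Rightarrow> bool" where
  "has_minor G H \<longleftrightarrow> (\<exists>G'. minor_step\<^sup>*\<^sup>* G G' \<and> graph_iso G' H)"

definition minor_free :: "'a graph \<Rightarrow> 'b graph \<Rightarrow> bool" where
  "minor_free G H \<longleftrightarrow> \<not> has_minor G H"

definition edge_maximal_minor_free :: "'a graph \<Rightarrow> 'b graph \<Rightarrow> bool" where
  "edge_maximal_minor_free G H \<longleftrightarrow> minor_free G H \<and>
     (\<forall>u\<in>verts G. \<forall>v\<in>verts G. u \<noteq> v \<and> {u, v} \<notin> edges G \<longrightarrow>
        has_minor (verts G, insert {u, v} (edges G)) H)"

definition K33 :: "nat graph" where
  "K33 = ({0..5}, {{i, j} | i j. i < 3 \<and> 3 \<le> j \<and> j \<le> 5})"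

end

theory Submission
  imports Defs "Jordan_Normal_Form.Spectral_Radius"
begin


lemma simple_finite: "simple_graph G \<Longrightarrow> finite (verts G)"
  by (simp add: simple_graph_def)

lemma nbrs_subset: "nbrs G w \<subseteq> verts G"
  by (auto simp: nbrs_def)

lemma finite_nbrs: "simple_graph G \<Longrightarrow> finite (nbrs G w)"
  using simple_finite nbrs_subset finite_subset by metis

lemma edge_not_loop: "simple_graph G \<Longrightarrow> {w} \<notin> edges G"
proof
  assume s: "simple_graph G" and e: "{w} \<in> edges G"
  then obtain a b where "a \<noteq> b" "{w} = {a, b}" unfolding simple_graph_def by blast
  then have "a \<in> {w}" "b \<in> {w}" by auto
  then show False using \<open>a \<noteq> b\<close> by auto
qed

lemma not_self_nbr: "simple_graph G \<Longrightarrow> w \<notin> nbrs G w"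
  using edge_not_loop[of G w] by (auto simp: nbrs_def)

lemma nbrs_sym: "u \<in> nbrs G w \<Longrightarrow> w \<in> verts G \<Longrightarrow> w \<in> nbrs G u"
  by (auto simp: nbrs_def insert_commute)

lemma sum_nbrs_swap:
  assumes "simple_graph G"
  shows "(\<Sum>w\<in>verts G. \<Sum>u\<in>nbrs G w. f w u) = (\<Sum>u\<in>verts G. \<Sum>w\<in>nbrs G u. f w u)"
proof -
  have fin: "finite (verts G)" using assms simple_finite by blast
  have "(\<Sum>w\<in>verts G. \<Sum>u\<in>nbrs G w. f w u) = (\<Sum>w\<in>verts G. \<Sum>u\<in>verts G. if {w,u} \<in> edges G then f w u else 0)"
    by (rule sum.cong[OF refl], simp add: sum.If_cases fin nbrs_def Int_def)
  also have "\<dots> = (\<Sum>u\<in>verts G. \<Sum>w\<in>verts G. if {w,u} \<in> edges G then f w u else 0)"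
    by (rule sum.swap)
  also have "\<dots> = (\<Sum>u\<in>verts G. \<Sum>w\<in>nbrs G u. f w u)"
    by (rule sum.cong[OF refl], simp add: sum.If_cases fin nbrs_def Int_def insert_commute)
  finally show ?thesis .
qed

lemma eigen_row_bound:
  assumes s: "simple_graph G" and ev: "Q_eigenvalue G \<mu>"
    and pos: "\<And>w. w \<in> verts G \<Longrightarrow> p w > 0"
    and row: "\<And>w. w \<in> verts G \<Longrightarrow> real (deg G w) * p w + (\<Sum>u\<in>nbrs G w. p u) \<le> c * p w"
  shows "\<mu> \<le> c"
proof -
  obtain x where nz: "\<exists>v\<in>verts G. x v \<noteq> 0"
    and eq: "\<And>v. v \<in> verts G \<Longrightarrow> real (deg G v) * x v + (\<Sum>w\<in>nbrs G v. x w) = \<mu> * x v"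
    using ev unfolding Q_eigenvalue_def by blast
  have fin: "finite (verts G)" using s simple_finite by blast
  have ne: "verts G \<noteq> {}" using nz by blast
  define r where "r w = \<bar>x w\<bar> / p w" for w
  obtain w where w: "w \<in> verts G" and wmax: "\<And>u. u \<in> verts G \<Longrightarrow> r u \<le> r w"
    using Max_in[of "r ` verts G"] fin ne Max_ge[of "r ` verts G"]
    by (metis (no_types, lifting) finite_imageI image_iff image_is_empty)
  obtain v where v: "v \<in> verts G" "x v \<noteq> 0" using nz by blast
  have "r v > 0" using v pos unfolding r_def by auto
  then have rw: "r w > 0" using wmax[OF v(1)] by linarith
  have pw: "p w > 0" using pos w by blast
  have xw: "\<bar>x w\<bar> = r w * p w" using pw unfolding r_def by simp
  have bnd: "\<And>u. u \<in> nbrs G w \<Longrightarrow> \<bar>x u\<bar> \<le> r w * p u"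
  proof -
    fix u assume "u \<in> nbrs G w"
    then have u: "u \<in> verts G" using nbrs_subset[of G w] by blast
    have "p u > 0" using pos u by blast
    then show "\<bar>x u\<bar> \<le> r w * p u" using wmax[OF u] unfolding r_def
      by (simp add: divide_le_eq mult.commute)
  qed
  have "(\<mu> - real (deg G w)) * x w = (\<Sum>u\<in>nbrs G w. x u)" using eq[OF w] by (simp add: algebra_simps)
  then have "\<bar>\<mu> - real (deg G w)\<bar> * \<bar>x w\<bar> = \<bar>\<Sum>u\<in>nbrs G w. x u\<bar>" by (metis abs_mult)
  also have "\<dots> \<le> (\<Sum>u\<in>nbrs G w. \<bar>x u\<bar>)" by (rule sum_abs)
  also have "\<dots> \<le> (\<Sum>u\<in>nbrs G w. r w * p u)" by (rule sum_mono, rule bnd)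
  also have "\<dots> = r w * (\<Sum>u\<in>nbrs G w. p u)" by (simp add: sum_distrib_left)
  finally have "\<bar>\<mu> - real (deg G w)\<bar> * (r w * p w) \<le> r w * (\<Sum>u\<in>nbrs G w. p u)" using xw by simp
  then have "\<bar>\<mu> - real (deg G w)\<bar> * p w \<le> (\<Sum>u\<in>nbrs G w. p u)" using rw
    by (simp add: mult.left_commute)
  then have "(\<mu> - real (deg G w)) * p w \<le> (\<Sum>u\<in>nbrs G w. p u)"
    by (smt (verit) abs_ge_self mult_right_mono pw)
  then have "\<mu> * p w \<le> c * p w" using row[OF w] by (simp add: algebra_simps)
  then show ?thesis using pw by simp
qed



lemma finite_edges: "simple_graph G \<Longrightarrow> finite (edges G)"
proof -
  assume s: "simple_graph G"
  have "edges G \<subseteq> Pow (verts G)"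
  proof
    fix e assume "e \<in> edges G"
    then obtain u v where "u \<in> verts G" "v \<in> verts G" "e = {u, v}"
      using s unfolding simple_graph_def by blast
    then show "e \<in> Pow (verts G)" by auto
  qed
  moreover have "finite (Pow (verts G))" using s simple_finite by blast
  ultimately show ?thesis using finite_subset by blast
qed

lemma steps_del_edges:
  assumes "finite F" "F \<subseteq> edges G"
  shows "minor_step\<^sup>*\<^sup>* G (verts G, edges G - F)"
  using assms
proof (induction F rule: finite_induct)
  case empty
  then show ?case by (simp add: verts_def edges_def)
next
  case (insert e F)
  then have IH: "minor_step\<^sup>*\<^sup>* G (verts G, edges G - F)" by blast
  have "e \<in> edges (verts G, edges G - F)" using insert by (simp add: edges_def)
  then have "minor_step (verts G, edges G - F) (verts (verts G, edges G - F), edges (verts G, edges G - F) - {e})"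
    by (rule minor_step.del_edge)
  moreover have "verts (verts G, edges G - F) = verts G" by (simp add: verts_def)
  moreover have "edges (verts G, edges G - F) - {e} = edges G - insert e F" by (auto simp: edges_def)
  ultimately have "minor_step (verts G, edges G - F) (verts G, edges G - insert e F)"
    by simp
  with IH show ?case by (rule rtranclp.rtrancl_into_rtrancl)
qed

lemma steps_del_verts:
  assumes "finite X" "X \<subseteq> verts G" "\<forall>e\<in>edges G. e \<inter> X = {}"
  shows "minor_step\<^sup>*\<^sup>* G (verts G - X, edges G)"
  using assms
proof (induction X rule: finite_induct)
  case empty
  then show ?case by (simp add: verts_def edges_def)
next
  case (insert x X)
  then have IH: "minor_step\<^sup>*\<^sup>* G (verts G - X, edges G)" by blast
  have "x \<in> verts (verts G - X, edges G)" using insert by (simp add: verts_def)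
  then have "minor_step (verts G - X, edges G) (verts (verts G - X, edges G) - {x},
      {e \<in> edges (verts G - X, edges G). x \<notin> e})"
    by (rule minor_step.del_vertex)
  moreover have "{e \<in> edges G. x \<notin> e} = edges G" using insert.prems by blast
  moreover have "verts (verts G - X, edges G) - {x} = verts G - insert x X" by (auto simp: verts_def)
  moreover have "edges (verts G - X, edges G) = edges G" by (simp add: edges_def)
  ultimately have "minor_step (verts G - X, edges G) (verts G - insert x X, edges G)"
    by simp
  with IH show ?case by (rule rtranclp.rtrancl_into_rtrancl)
qed

lemma K33_edge_iff:
  "{i, j} \<in> edges K33 \<longleftrightarrow> (i < 3 \<and> 3 \<le> j \<and> j \<le> 5) \<or> (j < 3 \<and> 3 \<le> i \<and> i \<le> (5::nat))"
  unfolding K33_def edges_def by (auto simp: doubleton_eq_iff)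

lemma K33_verts: "verts K33 = {0..5}"
  unfolding K33_def verts_def by simp

lemma three_common_minor:
  assumes s: "simple_graph G"
    and V: "a \<in> verts G" "b \<in> verts G" "c \<in> verts G"
    and d: "a \<noteq> b" "a \<noteq> c" "b \<noteq> c" "x \<noteq> y" "x \<noteq> z" "y \<noteq> z"
    and N: "x \<in> nbrs G a \<inter> nbrs G b \<inter> nbrs G c" "y \<in> nbrs G a \<inter> nbrs G b \<inter> nbrs G c"
           "z \<in> nbrs G a \<inter> nbrs G b \<inter> nbrs G c"
  shows "has_minor G K33"
proof -
  have nl: "\<And>w. w \<notin> nbrs G w" using not_self_nbr[OF s] by blast
  have d2: "a \<noteq> x" "a \<noteq> y" "a \<noteq> z" "b \<noteq> x" "b \<noteq> y" "b \<noteq> z" "c \<noteq> x" "c \<noteq> y" "c \<noteq> z"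
    using N nl by blast+
  have xyzV: "x \<in> verts G" "y \<in> verts G" "z \<in> verts G" using N by (auto simp: nbrs_def)
  define L where "L = {a, b, c}"
  define R where "R = {x, y, z}"
  define S where "S = L \<union> R"
  define EK where "EK = {{p, q} | p q. p \<in> L \<and> q \<in> R}"
  have EKsub: "EK \<subseteq> edges G"
  proof
    fix e assume "e \<in> EK"
    then obtain p q where e: "e = {p, q}" "p \<in> L" "q \<in> R" unfolding EK_def by blast
    then have "q \<in> nbrs G p" using N unfolding L_def R_def by auto
    then show "e \<in> edges G" using e(1) by (simp add: nbrs_def)
  qed
  have fE: "finite (edges G)" using finite_edges[OF s] .
  have st1: "minor_step\<^sup>*\<^sup>* G (verts G, edges G - (edges G - EK))"
    by (rule steps_del_edges, insert fE, auto)
  have eq1: "edges G - (edges G - EK) = EK" using EKsub by blast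
  have SV: "S \<subseteq> verts G" using V xyzV unfolding S_def L_def R_def by blast
  have st2: "minor_step\<^sup>*\<^sup>* (verts G, EK) (verts (verts G, EK) - (verts G - S), edges (verts G, EK))"
  proof (rule steps_del_verts)
    show "finite (verts G - S)" using simple_finite[OF s] by blast
    show "verts G - S \<subseteq> verts (verts G, EK)" by (simp add: verts_def)
    show "\<forall>e\<in>edges (verts G, EK). e \<inter> (verts G - S) = {}"
      unfolding edges_def EK_def S_def by auto
  qed
  have eq2: "verts (verts G, EK) - (verts G - S) = S" "edges (verts G, EK) = EK"
    using SV by (auto simp: verts_def edges_def)
  have steps: "minor_step\<^sup>*\<^sup>* G (S, EK)" using st1 st2 eq1 eq2 by simp
  define f :: "_ \<Rightarrow> nat" where "f w = (if w = a then 0 else if w = b then 1 else if w = c then 2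
      else if w = x then 3 else if w = y then 4 else 5)" for w
  have fL: "\<And>p. p \<in> S \<Longrightarrow> p \<in> L \<longleftrightarrow> f p < 3"
    unfolding S_def L_def R_def f_def using d d2 by auto
  have fR: "\<And>p. p \<in> S \<Longrightarrow> p \<in> R \<longleftrightarrow> 3 \<le> f p \<and> f p \<le> 5"
    unfolding S_def L_def R_def f_def using d d2 by auto
  have inj: "inj_on f S"
    unfolding inj_on_def S_def L_def R_def f_def using d d2 by auto
  have img: "f ` S = {0..5}"
  proof
    show "f ` S \<subseteq> {0..5}" unfolding f_def by auto
    show "{0..5} \<subseteq> f ` S"
    proof
      fix i :: nat assume "i \<in> {0..5}"
      then have "i = 0 \<or> i = 1 \<or> i = 2 \<or> i = 3 \<or> i = 4 \<or> i = 5" by auto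
      then show "i \<in> f ` S"
        unfolding S_def L_def R_def f_def using d d2
        by (elim disjE) (auto intro!: image_eqI)
    qed
  qed
  have bij: "bij_betw f (verts (S, EK)) (verts K33)"
    using inj img by (simp add: bij_betw_def verts_def K33_def)
  have EKiff: "\<And>p q. {p, q} \<in> EK \<longleftrightarrow> (p \<in> L \<and> q \<in> R) \<or> (q \<in> L \<and> p \<in> R)"
    unfolding EK_def by (auto simp: doubleton_eq_iff)
  have edg: "\<forall>p\<in>verts (S, EK). \<forall>q\<in>verts (S, EK). {p, q} \<in> edges (S, EK) \<longleftrightarrow> {f p, f q} \<in> edges K33"
  proof (intro ballI)
    fix p q assume "p \<in> verts (S, EK)" "q \<in> verts (S, EK)"
    then have p: "p \<in> S" and q: "q \<in> S" by (auto simp: verts_def)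
    show "{p, q} \<in> edges (S, EK) \<longleftrightarrow> {f p, f q} \<in> edges K33"
      unfolding K33_edge_iff using fL[OF p] fL[OF q] fR[OF p] fR[OF q] EKiff[of p q]
      by (simp add: edges_def)
  qed
  have "graph_iso (S, EK) K33" unfolding graph_iso_def using bij edg by blast
  then show ?thesis unfolding has_minor_def using steps by blast
qed



definition Mf :: "'a graph \<Rightarrow> 'a \<Rightarrow> 'a \<Rightarrow> 'b::comm_ring_1" where
  "Mf G w u = (if w = u then of_nat (deg G w) else if {w, u} \<in> edges G then 1 else 0)"

lemma sum_Mf:
  assumes s: "simple_graph G" and w: "w \<in> verts G"
  shows "(\<Sum>u\<in>verts G. Mf G w u * f u) = of_nat (deg G w) * f w + (\<Sum>u\<in>nbrs G w. f u)"
proof -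
  have fin: "finite (verts G)" using s simple_finite by blast
  have "(\<Sum>u\<in>verts G. Mf G w u * f u) = Mf G w w * f w + (\<Sum>u\<in>verts G - {w}. Mf G w u * f u)"
    using sum.remove[OF fin w] by blast
  also have "(\<Sum>u\<in>verts G - {w}. Mf G w u * f u) = (\<Sum>u\<in>verts G - {w}. if {w, u} \<in> edges G then f u else 0)"
    by (rule sum.cong, auto simp: Mf_def)
  also have "\<dots> = (\<Sum>u\<in>{u \<in> verts G - {w}. {w, u} \<in> edges G}. f u)"
    by (rule sum.inter_filter[symmetric], insert fin, auto)
  also have "{u \<in> verts G - {w}. {w, u} \<in> edges G} = nbrs G w"
    using not_self_nbr[OF s, of w] by (auto simp: nbrs_def)
  finally show ?thesis by (simp add: Mf_def)
qed

definition matG :: "'a graph \<Rightarrow> (nat \<Rightarrow> 'a) \<Rightarrow> nat \<Rightarrow> 'b::comm_ring_1 mat" where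
  "matG G h n = mat n n (\<lambda>(i, j). Mf G (h i) (h j))"

lemma matG_carrier: "matG G h n \<in> carrier_mat n n"
  unfolding matG_def by simp

lemma matG_mult:
  assumes h: "bij_betw h {0..<n} (verts G)" and i: "i < n"
  shows "(matG G h n *\<^sub>v vec n (\<lambda>j. f (h j))) $ i = (\<Sum>u\<in>verts G. Mf G (h i) u * f u)"
proof -
  have "(matG G h n *\<^sub>v vec n (\<lambda>j. f (h j))) $ i = (\<Sum>j\<in>{0..<n}. Mf G (h i) (h j) * f (h j))"
    using i unfolding matG_def by (simp add: scalar_prod_def)
  also have "\<dots> = (\<Sum>u\<in>verts G. Mf G (h i) u * f u)"
    using sum.reindex_bij_betw[OF h, of "\<lambda>u. Mf G (h i) u * f u"] by simp
  finally show ?thesis .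
qed

lemma Q_eig_mat:
  assumes s: "simple_graph G" and h: "bij_betw h {0..<n} (verts G)"
    and ev: "Q_eigenvalue G \<mu>"
  shows "eigenvalue (matG G h n :: real mat) \<mu>"
proof -
  obtain x where nz: "\<exists>v\<in>verts G. x v \<noteq> 0"
    and eq: "\<And>v. v \<in> verts G \<Longrightarrow> real (deg G v) * x v + (\<Sum>w\<in>nbrs G v. x w) = \<mu> * x v"
    using ev unfolding Q_eigenvalue_def by blast
  define z where "z = vec n (\<lambda>j. x (h j))"
  obtain v where v: "v \<in> verts G" "x v \<noteq> 0" using nz by blast
  then obtain j where j: "j < n" "h j = v" using h unfolding bij_betw_def
    by (metis (no_types, lifting) atLeastLessThan_iff imageE)
  have "z $ j \<noteq> 0" using j v unfolding z_def by simp
  then have znz: "z \<noteq> 0\<^sub>v n" using j by auto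
  have hi: "\<And>i. i < n \<Longrightarrow> h i \<in> verts G" using h unfolding bij_betw_def by auto
  have "matG G h n *\<^sub>v z = \<mu> \<cdot>\<^sub>v z"
  proof (rule eq_vecI)
    fix i assume "i < dim_vec (\<mu> \<cdot>\<^sub>v z)"
    then have i: "i < n" unfolding z_def by simp
    have "(matG G h n *\<^sub>v z) $ i = (\<Sum>u\<in>verts G. Mf G (h i) u * x u)"
      unfolding z_def by (rule matG_mult[OF h i])
    also have "\<dots> = real (deg G (h i)) * x (h i) + (\<Sum>u\<in>nbrs G (h i). x u)"
      by (rule sum_Mf[OF s hi[OF i]])
    also have "\<dots> = \<mu> * x (h i)" by (rule eq[OF hi[OF i]])
    finally show "(matG G h n *\<^sub>v z) $ i = (\<mu> \<cdot>\<^sub>v z) $ i" using i unfolding z_def by simp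
  next
    show "dim_vec (matG G h n *\<^sub>v z) = dim_vec (\<mu> \<cdot>\<^sub>v z)" unfolding z_def matG_def by simp
  qed
  then have "eigenvector (matG G h n) z \<mu>"
    unfolding eigenvector_def using znz by (simp add: z_def matG_def)
  then show ?thesis unfolding eigenvalue_def by blast
qed

lemma mat_eig_fun:
  assumes s: "simple_graph G" and h: "bij_betw h {0..<n} (verts G)"
    and ev: "eigenvector (matG G h n :: complex mat) z k"
  shows "\<exists>f. (\<exists>w\<in>verts G. f w \<noteq> 0) \<and>
     (\<forall>w\<in>verts G. of_nat (deg G w) * f w + (\<Sum>u\<in>nbrs G w. f u) = k * f w)"
proof -
  define g where "g = the_inv_into {0..<n} h"
  define f where "f w = z $ (g w)" for w
  have z: "z \<in> carrier_vec n" "z \<noteq> 0\<^sub>v n" "matG G h n *\<^sub>v z = k \<cdot>\<^sub>v z"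
    using ev unfolding eigenvector_def by (auto simp: matG_def)
  have gh: "\<And>j. j < n \<Longrightarrow> g (h j) = j"
    unfolding g_def using h the_inv_into_f_f[of h "{0..<n}"] unfolding bij_betw_def by auto
  have hi: "\<And>i. i < n \<Longrightarrow> h i \<in> verts G" using h unfolding bij_betw_def by auto
  have zv: "z = vec n (\<lambda>j. f (h j))"
    by (rule eq_vecI, insert z(1) gh, auto simp: f_def)
  obtain j where j: "j < n" "z $ j \<noteq> 0" using z(1,2) by force
  have nz: "\<exists>w\<in>verts G. f w \<noteq> 0" using j gh hi unfolding f_def by (metis)
  have eq: "\<forall>w\<in>verts G. of_nat (deg G w) * f w + (\<Sum>u\<in>nbrs G w. f u) = k * f w"
  proof
    fix w assume w: "w \<in> verts G"
    then obtain i where i: "i < n" "h i = w" using h unfolding bij_betw_def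
      by (metis (no_types, lifting) atLeastLessThan_iff imageE)
    have "(matG G h n *\<^sub>v z) $ i = (k \<cdot>\<^sub>v z) $ i" using z(3) by simp
    also have "\<dots> = k * f w" using i z(1) gh unfolding f_def by auto
    finally have "(matG G h n *\<^sub>v z) $ i = k * f w" .
    moreover have "(matG G h n *\<^sub>v z) $ i = (\<Sum>u\<in>verts G. Mf G w u * f u)"
      using matG_mult[OF h i(1), of f] i zv by simp
    ultimately show "of_nat (deg G w) * f w + (\<Sum>u\<in>nbrs G w. f u) = k * f w"
      using sum_Mf[OF s w, of f] by simp
  qed
  show ?thesis using nz eq by blast
qed



lemma real_eig:
  fixes f :: "'a \<Rightarrow> complex"
  assumes s: "simple_graph G" and nz: "\<exists>w\<in>verts G. f w \<noteq> 0"
    and eq: "\<forall>w\<in>verts G. of_nat (deg G w) * f w + (\<Sum>u\<in>nbrs G w. f u) = k * f w"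
  shows "Q_eigenvalue G (Re k)"
proof -
  have fin: "finite (verts G)" using s simple_finite by blast
  define T where "T = (\<Sum>w\<in>verts G. (cmod (f w))\<^sup>2)"
  have Tpos: "T > 0"
  proof -
    obtain w where w: "w \<in> verts G" "f w \<noteq> 0" using nz by blast
    have "(cmod (f w))\<^sup>2 > 0" using w by simp
    moreover have "(cmod (f w))\<^sup>2 \<le> T" unfolding T_def
      by (rule member_le_sum[OF w(1)], auto simp: fin)
    ultimately show ?thesis by linarith
  qed
  define C where "C = (\<Sum>w\<in>verts G. \<Sum>u\<in>nbrs G w. cnj (f w) * f u)"
  have "cnj C = (\<Sum>w\<in>verts G. \<Sum>u\<in>nbrs G w. f w * cnj (f u))"
    unfolding C_def by (simp add: cnj_sum)
  also have "\<dots> = (\<Sum>u\<in>verts G. \<Sum>w\<in>nbrs G u. f w * cnj (f u))"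
    by (rule sum_nbrs_swap[OF s])
  also have "\<dots> = C" unfolding C_def by (simp add: mult.commute)
  finally have "cnj C = C" .
  then have "Im (cnj C) = Im C" by simp
  then have ImC: "Im C = 0" by simp
  have "(\<Sum>w\<in>verts G. cnj (f w) * (of_nat (deg G w) * f w + (\<Sum>u\<in>nbrs G w. f u)))
      = (\<Sum>w\<in>verts G. cnj (f w) * (k * f w))"
    using eq by (intro sum.cong) auto
  moreover have "(\<Sum>w\<in>verts G. cnj (f w) * (of_nat (deg G w) * f w + (\<Sum>u\<in>nbrs G w. f u)))
      = (\<Sum>w\<in>verts G. of_nat (deg G w) * (f w * cnj (f w))) + C"
    unfolding C_def by (simp add: sum.distrib distrib_left sum_distrib_left mult_ac)
  moreover have "(\<Sum>w\<in>verts G. cnj (f w) * (k * f w)) = k * of_real T"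
  proof -
    have t: "\<And>w. cnj (f w) * (k * f w) = k * of_real ((cmod (f w))\<^sup>2)"
      by (simp only: complex_norm_square) (simp add: mult_ac)
    show ?thesis unfolding T_def of_real_sum sum_distrib_left t ..
  qed
  ultimately have "k * of_real T = (\<Sum>w\<in>verts G. of_nat (deg G w) * (f w * cnj (f w))) + C"
    by simp
  then have "Im (k * of_real T) = 0" using ImC by (simp add: Im_sum)
  then have Imk: "Im k = 0" using Tpos by simp
  have eqR: "\<forall>w\<in>verts G. real (deg G w) * Re (f w) + (\<Sum>u\<in>nbrs G w. Re (f u)) = Re k * Re (f w)"
  proof
    fix w assume "w \<in> verts G"
    then have "Re (of_nat (deg G w) * f w + (\<Sum>u\<in>nbrs G w. f u)) = Re (k * f w)" using eq by simp
    then show "real (deg G w) * Re (f w) + (\<Sum>u\<in>nbrs G w. Re (f u)) = Re k * Re (f w)"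
      using Imk by (simp add: Re_sum)
  qed
  have eqI: "\<forall>w\<in>verts G. real (deg G w) * Im (f w) + (\<Sum>u\<in>nbrs G w. Im (f u)) = Re k * Im (f w)"
  proof
    fix w assume "w \<in> verts G"
    then have "Im (of_nat (deg G w) * f w + (\<Sum>u\<in>nbrs G w. f u)) = Im (k * f w)" using eq by simp
    then show "real (deg G w) * Im (f w) + (\<Sum>u\<in>nbrs G w. Im (f u)) = Re k * Im (f w)"
      using Imk by (simp add: Im_sum)
  qed
  obtain w where w: "w \<in> verts G" "f w \<noteq> 0" using nz by blast
  then have "Re (f w) \<noteq> 0 \<or> Im (f w) \<noteq> 0" using complex_eqI by force
  then show ?thesis
  proof
    assume "Re (f w) \<noteq> 0"
    then show ?thesis unfolding Q_eigenvalue_def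
      by (intro exI[of _ "\<lambda>w. Re (f w)"] conjI) (use w(1) eqR in auto)
  next
    assume "Im (f w) \<noteq> 0"
    then show ?thesis unfolding Q_eigenvalue_def
      by (intro exI[of _ "\<lambda>w. Im (f w)"] conjI) (use w(1) eqI in auto)
  qed
qed

lemma signless_q_le:
  assumes s: "simple_graph G" and ne: "verts G \<noteq> {}"
    and bnd: "\<And>\<mu>. Q_eigenvalue G \<mu> \<Longrightarrow> \<mu> \<le> c"
  shows "signless_q G \<le> c"
proof -
  have fin: "finite (verts G)" using s simple_finite by blast
  define n where "n = card (verts G)"
  have npos: "n > 0" using fin ne unfolding n_def by (simp add: card_gt_0_iff)
  obtain h where h: "bij_betw h {0..<n} (verts G)"
    using ex_bij_betw_nat_finite[OF fin] unfolding n_def by blast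
  have sub: "{\<mu>. Q_eigenvalue G \<mu>} \<subseteq> spectrum (matG G h n :: real mat)"
    using Q_eig_mat[OF s h] unfolding spectrum_def by blast
  have finS: "finite {\<mu>. Q_eigenvalue G \<mu>}"
    using card_finite_spectrum(1)[OF matG_carrier] sub finite_subset by blast
  have "spectrum (matG G h n :: complex mat) \<noteq> {}"
    by (rule spectrum_non_empty[OF matG_carrier npos])
  then obtain k where "eigenvalue (matG G h n :: complex mat) k" unfolding spectrum_def by blast
  then obtain z where "eigenvector (matG G h n :: complex mat) z k" unfolding eigenvalue_def by blast
  from mat_eig_fun[OF s h this] obtain f where
    "(\<exists>w\<in>verts G. f w \<noteq> 0)" "(\<forall>w\<in>verts G. of_nat (deg G w) * f w + (\<Sum>u\<in>nbrs G w. f u) = k * f w)"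
    by blast
  from real_eig[OF s this] have "Q_eigenvalue G (Re k)" .
  then have neS: "{\<mu>. Q_eigenvalue G \<mu>} \<noteq> {}" by blast
  show ?thesis unfolding signless_q_def using Max_le_iff[OF finS neS] bnd by blast
qed



lemma common3:
  assumes s: "simple_graph G" and mf: "minor_free G K33"
    and V: "a \<in> verts G" "b \<in> verts G" "c \<in> verts G"
    and d: "a \<noteq> b" "a \<noteq> c" "b \<noteq> c"
  shows "card (nbrs G a \<inter> nbrs G b \<inter> nbrs G c) \<le> 2"
proof (rule ccontr)
  assume "\<not> ?thesis"
  then have c3: "3 \<le> card (nbrs G a \<inter> nbrs G b \<inter> nbrs G c)" by simp
  have fin: "finite (nbrs G a \<inter> nbrs G b \<inter> nbrs G c)" using finite_nbrs[OF s] by blast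
  obtain T where T: "T \<subseteq> nbrs G a \<inter> nbrs G b \<inter> nbrs G c" "card T = 3"
    using obtain_subset_with_card_n[OF c3] by blast
  then obtain x y z where xyz: "T = {x, y, z}" "x \<noteq> y" "y \<noteq> z" "x \<noteq> z"
    unfolding card_3_iff by blast
  have "has_minor G K33"
    by (rule three_common_minor[OF s V d xyz(2) xyz(4) xyz(3)], insert T xyz(1), auto)
  then show False using mf unfolding minor_free_def by blast
qed

lemma deg_sum_bound:
  assumes s: "simple_graph G"
    and V: "j \<in> verts G" "u \<in> verts G" "v \<in> verts G"
    and d: "j \<noteq> u" "j \<noteq> v" "u \<noteq> v"
    and F: "card (nbrs G j \<inter> nbrs G u \<inter> nbrs G v) \<le> 2"
    and nv: "nbrs G v = verts G - {v}"
  shows "deg G j + deg G u \<le> card (verts G) + 3"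
proof -
  have fin: "finite (verts G)" using s simple_finite by blast
  have sub: "nbrs G j \<subseteq> ((nbrs G j \<inter> nbrs G u \<inter> nbrs G v) \<union> {v}) \<union> (verts G - nbrs G u)"
    using nbrs_subset[of G j] nv by blast
  have f1: "finite (nbrs G j \<inter> nbrs G u \<inter> nbrs G v)" using finite_nbrs[OF s] by blast
  have "card ((nbrs G j \<inter> nbrs G u \<inter> nbrs G v) \<union> {v}) \<le> 3"
    using card_Un_le[of "nbrs G j \<inter> nbrs G u \<inter> nbrs G v" "{v}"] F by simp
  moreover have "card (verts G - nbrs G u) = card (verts G) - deg G u"
    unfolding deg_def by (rule card_Diff_subset[OF finite_nbrs[OF s] nbrs_subset])
  moreover have "deg G u \<le> card (verts G)"
    unfolding deg_def by (rule card_mono[OF fin nbrs_subset])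
  moreover have "deg G j \<le> card ((nbrs G j \<inter> nbrs G u \<inter> nbrs G v) \<union> {v}) + card (verts G - nbrs G u)"
    unfolding deg_def using card_mono[OF _ sub] card_Un_le fin f1
    by (meson finite.emptyI finite.insertI finite_Diff finite_UnI le_trans)
  ultimately show ?thesis by linarith
qed

lemma bonferroni_weak:
  assumes "finite I" "\<And>i. i \<in> I \<Longrightarrow> finite (A i)"
  shows "(\<Sum>i\<in>I. card (A i)) \<le> card (\<Union>i\<in>I. A i) + (\<Sum>i\<in>I. \<Sum>j\<in>I - {i}. card (A i \<inter> A j))"
  using assms
proof (induction I rule: finite_induct)
  case empty
  then show ?case by simp
next
  case (insert a I)
  define U where "U = (\<Union>i\<in>I. A i)"
  have fa: "finite (A a)" using insert by blast
  have fU: "finite U" unfolding U_def using insert by blast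
  have IH: "(\<Sum>i\<in>I. card (A i)) \<le> card U + (\<Sum>i\<in>I. \<Sum>j\<in>I - {i}. card (A i \<inter> A j))"
    using insert unfolding U_def by blast
  have un: "card (A a) + card U = card (A a \<union> U) + card (A a \<inter> U)"
    by (rule card_Un_Int[OF fa fU])
  have "A a \<inter> U = (\<Union>j\<in>I. A a \<inter> A j)" unfolding U_def by blast
  moreover have "card (\<Union>j\<in>I. A a \<inter> A j) \<le> (\<Sum>j\<in>I. card (A a \<inter> A j))"
    by (rule card_UN_le[OF insert(1)])
  ultimately have int: "card (A a \<inter> U) \<le> (\<Sum>j\<in>I. card (A a \<inter> A j))"
    by simp
  have s1: "(\<Sum>j\<in>insert a I - {a}. card (A a \<inter> A j)) = (\<Sum>j\<in>I. card (A a \<inter> A j))"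
    using insert(2) by (simp add: insert_Diff_if)
  have s2: "(\<Sum>i\<in>I. \<Sum>j\<in>I - {i}. card (A i \<inter> A j)) \<le> (\<Sum>i\<in>I. \<Sum>j\<in>insert a I - {i}. card (A i \<inter> A j))"
    by (rule sum_mono, rule sum_mono2, insert insert(1), auto)
  have "(\<Sum>i\<in>insert a I. \<Sum>j\<in>insert a I - {i}. card (A i \<inter> A j))
      = (\<Sum>j\<in>insert a I - {a}. card (A a \<inter> A j)) + (\<Sum>i\<in>I. \<Sum>j\<in>insert a I - {i}. card (A i \<inter> A j))"
    using insert(1,2) by simp
  moreover have "(\<Sum>i\<in>insert a I. card (A i)) = card (A a) + (\<Sum>i\<in>I. card (A i))"
    using insert(1,2) by simp
  moreover have "card (\<Union>i\<in>insert a I. A i) = card (A a \<union> U)" unfolding U_def by simp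
  ultimately show ?case using IH un int s1 s2 by linarith
qed



lemma weights_lemma:
  assumes s: "simple_graph G" and v: "v \<in> verts G" and nv: "nbrs G v = verts G - {v}"
    and ne: "verts G - {v} \<noteq> {}"
    and qpos: "\<And>w. w \<in> verts G - {v} \<Longrightarrow> q w > 0"
    and row: "\<And>w. w \<in> verts G - {v} \<Longrightarrow>
      real (deg G w) * q w + (\<Sum>u\<in>verts G - {v}. q u) / 3 + (\<Sum>u\<in>nbrs G w - {v}. q u)
        \<le> (real (card (verts G)) + 2) * q w"
    and ev: "Q_eigenvalue G \<mu>"
  shows "\<mu> \<le> real (card (verts G)) + 2"
proof -
  have fin: "finite (verts G)" using s simple_finite by blast
  define P where "P = (\<Sum>u\<in>verts G - {v}. q u)"
  have Ppos: "P > 0" unfolding P_def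
    by (rule sum_pos, insert fin ne qpos, auto)
  define p where "p = q(v := P / 3)"
  show ?thesis
  proof (rule eigen_row_bound[OF s ev, of p])
    fix w assume w: "w \<in> verts G"
    show "p w > 0" using Ppos qpos w unfolding p_def by auto
  next
    fix w assume w: "w \<in> verts G"
    show "real (deg G w) * p w + (\<Sum>u\<in>nbrs G w. p u) \<le> (real (card (verts G)) + 2) * p w"
    proof (cases "w = v")
      case True
      have dv: "deg G v = card (verts G) - 1" unfolding deg_def nv using v fin by simp
      have n1: "card (verts G) \<ge> 1" using v fin by (metis One_nat_def Suc_leI card_gt_0_iff empty_iff)
      have "(\<Sum>u\<in>nbrs G w. p u) = P" unfolding True nv P_def p_def by (rule sum.cong, auto)
      moreover have c: "real (card (verts G)) + 2 = real (deg G v) + 3" using dv n1 by simp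
      moreover have "real (deg G v) * (P/3) + P = (real (deg G v) + 3) * (P/3)"
        by (simp add: algebra_simps)
      ultimately show ?thesis using True unfolding p_def by (simp add: add.commute)
    next
      case False
      have wv: "w \<in> verts G - {v}" using w False by blast
      have vn: "v \<in> nbrs G w" using nbrs_sym[of w G v] wv nv v by blast
      have "(\<Sum>u\<in>nbrs G w. p u) = p v + (\<Sum>u\<in>nbrs G w - {v}. p u)"
        by (rule sum.remove[OF finite_nbrs[OF s] vn])
      also have "(\<Sum>u\<in>nbrs G w - {v}. p u) = (\<Sum>u\<in>nbrs G w - {v}. q u)"
        unfolding p_def by (rule sum.cong, auto)
      finally have "(\<Sum>u\<in>nbrs G w. p u) = P / 3 + (\<Sum>u\<in>nbrs G w - {v}. q u)"
        unfolding p_def by simp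
      moreover have "p w = q w" unfolding p_def using False by simp
      ultimately show ?thesis using row[OF wv] unfolding P_def by simp
    qed
  qed
qed



lemma sum_delta_weight:
  assumes "finite S"
  shows "(\<Sum>w\<in>S. if w = u then c else (1::real)) = real (card S) + (if u \<in> S then c - 1 else 0)"
proof -
  have "(\<Sum>w\<in>S. if w = u then c else (1::real)) = (\<Sum>w\<in>S. 1 + (if w = u then c - 1 else 0))"
    by (rule sum.cong, auto)
  also have "\<dots> = real (card S) + (\<Sum>w\<in>S. if w = u then c - 1 else 0)"
    by (simp add: sum.distrib)
  also have "(\<Sum>w\<in>S. if w = u then c - 1 else 0) = (if u \<in> S then c - 1 else 0)"
    using sum.delta[OF assms, of u "\<lambda>_. c - 1"] by simp
  finally show ?thesis .
qed

lemma caseA: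
  assumes s: "simple_graph G" and v: "v \<in> verts G" and nv: "nbrs G v = verts G - {v}"
    and n: "card (verts G) \<ge> 1186"
    and degb: "\<And>w. w \<in> verts G - {v} \<Longrightarrow> deg G w \<le> card (verts G) - 2"
    and F1: "\<And>a b c. a \<in> verts G \<Longrightarrow> b \<in> verts G \<Longrightarrow> c \<in> verts G \<Longrightarrow> a \<noteq> b \<Longrightarrow> a \<noteq> c \<Longrightarrow> b \<noteq> c
       \<Longrightarrow> card (nbrs G a \<inter> nbrs G b \<inter> nbrs G c) \<le> 2"
    and u: "u \<in> verts G - {v}" and big: "12 * deg G u \<ge> 11 * card (verts G)"
    and ev: "Q_eigenvalue G \<mu>"
  shows "\<mu> \<le> real (card (verts G)) + 2"
proof -
  define N where "N = card (verts G)"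
  have fin: "finite (verts G)" using s simple_finite by blast
  define c :: real where "c = 4 * real N / 11"
  define q where "q w = (if w = u then c else 1)" for w
  have cge: "c \<ge> 1" using n unfolding c_def N_def by simp
  have sumq: "\<And>S. S \<subseteq> verts G \<Longrightarrow> (\<Sum>w\<in>S. q w) = real (card S) + (if u \<in> S then c - 1 else 0)"
    unfolding q_def by (rule sum_delta_weight, insert fin, auto intro: finite_subset)
  have cardVv: "card (verts G - {v}) = N - 1" unfolding N_def using v fin by simp
  have P: "(\<Sum>w\<in>verts G - {v}. q w) = real N - 2 + c"
    using sumq[of "verts G - {v}"] u cardVv n unfolding N_def by auto
  have ne: "verts G - {v} \<noteq> {}" using u by blast
  have degN: "\<And>w. w \<in> verts G - {v} \<Longrightarrow> real (deg G w) \<le> real N - 2"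
  proof -
    fix w assume "w \<in> verts G - {v}"
    then have "real (deg G w) \<le> real (N - 2)" using degb unfolding N_def by simp
    moreover have "real (N - 2) = real N - 2" using n unfolding N_def by (simp add: of_nat_diff)
    ultimately show "real (deg G w) \<le> real N - 2" by simp
  qed
  show ?thesis
  proof (rule weights_lemma[OF s v nv ne, of q])
    fix w assume "w \<in> verts G - {v}"
    then show "q w > 0" unfolding q_def using cge by auto
  next
    show "Q_eigenvalue G \<mu>" by (rule ev)
  next
    fix w assume w: "w \<in> verts G - {v}"
    have vn: "v \<in> nbrs G w" using nbrs_sym[of w G v] w nv v by blast
    have sub: "nbrs G w - {v} \<subseteq> verts G" using nbrs_subset[of G w] by blast
    have cn: "card (nbrs G w - {v}) = deg G w - 1" unfolding deg_def using vn finite_nbrs[OF s] by simp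
    have dpos: "deg G w \<ge> 1" unfolding deg_def using vn finite_nbrs[OF s]
      by (metis One_nat_def Suc_leI card_gt_0_iff empty_iff)
    have sw: "(\<Sum>x\<in>nbrs G w - {v}. q x) \<le> real (deg G w) - 1 + (if u \<in> nbrs G w - {v} then c - 1 else 0)"
      using sumq[OF sub] cn dpos by simp
    show "real (deg G w) * q w + (\<Sum>x\<in>verts G - {v}. q x) / 3 + (\<Sum>x\<in>nbrs G w - {v}. q x)
        \<le> (real (card (verts G)) + 2) * q w"
    proof (cases "w = u")
      case True
      have nu: "u \<notin> nbrs G w - {v}" using True not_self_nbr[OF s] by blast
      have sw': "(\<Sum>x\<in>nbrs G w - {v}. q x) \<le> real (deg G w)" using sw nu by (simp split: if_splits)
      have dle: "real (deg G w) \<le> real N - 2" using degN[OF w] .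
      have "4 * c \<le> (real N + 2 - real (deg G w)) * c"
        by (rule mult_right_mono, insert dle cge, auto)
      then have "real (deg G w) * c + 4 * c \<le> (real N + 2) * c" by (simp add: algebra_simps)
      moreover have "(real N - 2 + c) / 3 + real (deg G w) \<le> 4 * c"
        using dle n unfolding c_def N_def by (simp add: field_simps)
      ultimately show ?thesis using True sw' P unfolding q_def N_def by simp
    next
      case False
      have "deg G w + deg G u \<le> N + 3" unfolding N_def
        by (rule deg_sum_bound[OF s _ _ v _ _ _ F1 nv], insert w u False v, auto)
      then have dw: "12 * real (deg G w) \<le> real N + 36" using big unfolding N_def by simp
      have sw': "(\<Sum>x\<in>nbrs G w - {v}. q x) \<le> real (deg G w) - 1 + c" using sw cge by (simp split: if_splits)
      have "real (deg G w) + (real N - 2 + c) / 3 + (real (deg G w) - 1 + c) \<le> real N + 2"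
        using dw n unfolding c_def N_def by (simp add: field_simps)
      then show ?thesis using False sw' P unfolding q_def N_def by simp
    qed
  qed
qed



lemma sum_set_weight:
  assumes "finite S"
  shows "(\<Sum>w\<in>S. if w \<in> B then (17::real) else 1) = real (card S) + 16 * real (card (S \<inter> B))"
proof -
  have "(\<Sum>w\<in>S. if w \<in> B then (17::real) else 1) = (\<Sum>w\<in>S. 1 + (if w \<in> B then 16 else 0))"
    by (rule sum.cong, auto)
  also have "\<dots> = real (card S) + (\<Sum>w\<in>S. if w \<in> B then 16 else 0)"
    by (simp add: sum.distrib)
  also have "(\<Sum>w\<in>S. if w \<in> B then (16::real) else 0) = 16 * real (card (S \<inter> B))"
    using sum.inter_filter[OF assms, of "\<lambda>_. (16::real)" "\<lambda>w. w \<in> B", symmetric] assms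
    by (simp add: Int_def conj_commute)
  finally show ?thesis .
qed

lemma card_big_le4:
  assumes s: "simple_graph G" and v: "v \<in> verts G" and nv: "nbrs G v = verts G - {v}"
    and n: "card (verts G) \<ge> 1186"
    and F1: "\<And>a b c. a \<in> verts G \<Longrightarrow> b \<in> verts G \<Longrightarrow> c \<in> verts G \<Longrightarrow> a \<noteq> b \<Longrightarrow> a \<noteq> c \<Longrightarrow> b \<noteq> c
       \<Longrightarrow> card (nbrs G a \<inter> nbrs G b \<inter> nbrs G c) \<le> 2"
  shows "card {w \<in> verts G - {v}. card (verts G) < 4 * deg G w} \<le> 4"
proof (rule ccontr)
  define N where "N = card (verts G)"
  define B where "B = {w \<in> verts G - {v}. N < 4 * deg G w}"
  assume "\<not> ?thesis"
  then have "5 \<le> card B" unfolding B_def N_def by simp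
  then obtain I where I: "I \<subseteq> B" "card I = 5" "finite I" by (rule obtain_subset_with_card_n)
  have fin: "finite (verts G)" using s simple_finite by blast
  have finI': "finite I" using I by (simp add: card_ge_0_finite)
  define A where "A b = nbrs G b - {v}" for b
  have fA: "\<And>b. finite (A b)" unfolding A_def using finite_nbrs[OF s] by blast
  have bon: "(\<Sum>i\<in>I. card (A i)) \<le> card (\<Union>i\<in>I. A i) + (\<Sum>i\<in>I. \<Sum>j\<in>I - {i}. card (A i \<inter> A j))"
    by (rule bonferroni_weak[OF finI' fA])
  have un: "card (\<Union>i\<in>I. A i) \<le> N - 1"
  proof -
    have "(\<Union>i\<in>I. A i) \<subseteq> verts G - {v}" unfolding A_def using nbrs_subset[of G] by blast
    then have "card (\<Union>i\<in>I. A i) \<le> card (verts G - {v})" using fin by (simp add: card_mono)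
    then show ?thesis unfolding N_def using v fin by simp
  qed
  have pair: "\<And>i j. i \<in> I \<Longrightarrow> j \<in> I - {i} \<Longrightarrow> card (A i \<inter> A j) \<le> 2"
  proof -
    fix i j assume ij: "i \<in> I" "j \<in> I - {i}"
    then have iv: "i \<in> verts G" "i \<noteq> v" "j \<in> verts G" "j \<noteq> v" "i \<noteq> j" using I(1) unfolding B_def by auto
    have "A i \<inter> A j \<subseteq> nbrs G i \<inter> nbrs G j \<inter> nbrs G v" unfolding A_def nv using nbrs_subset[of G i] by blast
    then have "card (A i \<inter> A j) \<le> card (nbrs G i \<inter> nbrs G j \<inter> nbrs G v)"
      by (rule card_mono[rotated], insert finite_nbrs[OF s], blast)
    also have "\<dots> \<le> 2" by (rule F1, insert iv v, auto)
    finally show "card (A i \<inter> A j) \<le> 2" .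
  qed
  have "(\<Sum>i\<in>I. \<Sum>j\<in>I - {i}. card (A i \<inter> A j)) \<le> (\<Sum>i\<in>I. \<Sum>j\<in>I - {i}. 2)"
    by (rule sum_mono, rule sum_mono, rule pair)
  also have "\<dots> = 40" using I(2) finI' by (simp add: card_Diff_singleton)
  finally have p40: "(\<Sum>i\<in>I. \<Sum>j\<in>I - {i}. card (A i \<inter> A j)) \<le> 40" .
  have lowA: "\<And>i. i \<in> I \<Longrightarrow> N - 3 \<le> 4 * card (A i)"
  proof -
    fix i assume i: "i \<in> I"
    then have iv: "i \<in> verts G - {v}" "N < 4 * deg G i" using I(1) unfolding B_def by auto
    have "v \<in> nbrs G i" using nbrs_sym[of i G v] iv nv v by blast
    then have "card (A i) = deg G i - 1" unfolding A_def deg_def using finite_nbrs[OF s] by simp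
    then show "N - 3 \<le> 4 * card (A i)" using iv by linarith
  qed
  have "(\<Sum>i\<in>I. N - 3) \<le> (\<Sum>i\<in>I. 4 * card (A i))" by (rule sum_mono, rule lowA)
  then have "5 * (N - 3) \<le> 4 * (\<Sum>i\<in>I. card (A i))" using I(2) by (simp add: sum_distrib_left)
  moreover have S1: "(\<Sum>i\<in>I. card (A i)) \<le> N - 1 + 40" using bon un p40 by linarith
  ultimately have "5 * (N - 3) \<le> 4 * (N - 1 + 40)" by (meson le_trans mult_le_mono2)
  then show False using n unfolding N_def by presburger
qed



lemma caseB:
  assumes s: "simple_graph G" and v: "v \<in> verts G" and nv: "nbrs G v = verts G - {v}"
    and n: "card (verts G) \<ge> 1186"
    and F1: "\<And>a b c. a \<in> verts G \<Longrightarrow> b \<in> verts G \<Longrightarrow> c \<in> verts G \<Longrightarrow> a \<noteq> b \<Longrightarrow> a \<noteq> c \<Longrightarrow> b \<noteq> c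
       \<Longrightarrow> card (nbrs G a \<inter> nbrs G b \<inter> nbrs G c) \<le> 2"
    and small: "\<And>w. w \<in> verts G - {v} \<Longrightarrow> 12 * deg G w < 11 * card (verts G)"
    and ne: "verts G - {v} \<noteq> {}"
    and ev: "Q_eigenvalue G \<mu>"
  shows "\<mu> \<le> real (card (verts G)) + 2"
proof -
  define N where "N = card (verts G)"
  have fin: "finite (verts G)" using s simple_finite by blast
  define B where "B = {w \<in> verts G - {v}. N < 4 * deg G w}"
  have cB: "card B \<le> 4" unfolding B_def N_def by (rule card_big_le4[OF s v nv n F1])
  have finB: "finite B" unfolding B_def using fin by simp
  define q where "q w = (if w \<in> B then (17::real) else 1)" for w
  have sumq: "\<And>S. finite S \<Longrightarrow> (\<Sum>w\<in>S. q w) = real (card S) + 16 * real (card (S \<inter> B))"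
    unfolding q_def by (rule sum_set_weight)
  have c4: "\<And>S. real (card (S \<inter> B)) \<le> 4"
  proof -
    fix S
    have "card (S \<inter> B) \<le> card B" by (rule card_mono[OF finB], blast)
    then show "real (card (S \<inter> B)) \<le> 4" using cB by simp
  qed
  have cardVv: "card (verts G - {v}) = N - 1" unfolding N_def using v fin by simp
  have P: "(\<Sum>w\<in>verts G - {v}. q w) \<le> real N - 1 + 64"
  proof -
    have "(\<Sum>w\<in>verts G - {v}. q w) = real (N - 1) + 16 * real (card ((verts G - {v}) \<inter> B))"
      using sumq[of "verts G - {v}"] fin cardVv by simp
    moreover have "real (N - 1) = real N - 1" using n unfolding N_def by (simp add: of_nat_diff)
    ultimately show ?thesis using c4[of "verts G - {v}"] by simp
  qed
  show ?thesis
  proof (rule weights_lemma[OF s v nv ne, of q])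
    fix w assume "w \<in> verts G - {v}"
    then show "q w > 0" unfolding q_def by auto
  next
    show "Q_eigenvalue G \<mu>" by (rule ev)
  next
    fix w assume w: "w \<in> verts G - {v}"
    have cn: "card (nbrs G w - {v}) \<le> deg G w" unfolding deg_def
      by (rule card_mono[OF finite_nbrs[OF s]], blast)
    have sw: "(\<Sum>x\<in>nbrs G w - {v}. q x) \<le> real (deg G w) + 64"
      using sumq[of "nbrs G w - {v}"] finite_nbrs[OF s, of w] cn c4[of "nbrs G w - {v}"] by simp
    have dw: "12 * real (deg G w) \<le> 11 * real N" using small[OF w] unfolding N_def by linarith
    show "real (deg G w) * q w + (\<Sum>x\<in>verts G - {v}. q x) / 3 + (\<Sum>x\<in>nbrs G w - {v}. q x)
        \<le> (real (card (verts G)) + 2) * q w"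
    proof (cases "w \<in> B")
      case True
      have "real (deg G w) * 17 + (real N - 1 + 64) / 3 + (real (deg G w) + 64) \<le> (real N + 2) * 17"
        using dw n unfolding N_def by (simp add: field_simps)
      moreover have qw: "q w = 17" using True unfolding q_def by simp
      ultimately show ?thesis using sw P unfolding N_def qw by argo
    next
      case False
      then have "4 * deg G w \<le> N" using w unfolding B_def by auto
      then have d4: "4 * real (deg G w) \<le> real N" by linarith
      have "real (deg G w) + (real N - 1 + 64) / 3 + (real (deg G w) + 64) \<le> real N + 2"
        using d4 n unfolding N_def by (simp add: field_simps)
      moreover have qw: "q w = 1" using False unfolding q_def by simp
      ultimately show ?thesis using sw P unfolding N_def qw by argo
    qed
  qed
qed



theorem lemma4p3:
  fixes G :: "'a graph"
  assumes "simple_graph G"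
    and "edge_maximal_minor_free G K33"
    and "card (verts G) \<ge> 1186"
    and "max_degree G = card (verts G) - 1"
    and "second_max_degree G \<le> card (verts G) - 2"
  shows "signless_q G \<le> real (card (verts G)) + 2"
proof -
  note s = assms(1)
  note n = assms(3)
  have fin: "finite (verts G)" using s simple_finite by blast
  have ne: "verts G \<noteq> {}" using n by auto
  have mf: "minor_free G K33" using assms(2) unfolding edge_maximal_minor_free_def by blast
  note F1 = common3[OF s mf]
  have "max_degree G \<in> deg G ` verts G" unfolding max_degree_def
    by (rule Max_in, insert fin ne, auto)
  then obtain v0 where "v0 \<in> verts G" "max_degree G = deg G v0" by (rule imageE)
  then have ex: "\<exists>v. v \<in> verts G \<and> deg G v = max_degree G" by metis
  define v where "v = (SOME v. v \<in> verts G \<and> deg G v = max_degree G)"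
  have vprops: "v \<in> verts G \<and> deg G v = max_degree G" unfolding v_def by (rule someI_ex[OF ex])
  then have v: "v \<in> verts G" and dv: "deg G v = card (verts G) - 1" using assms(4) by auto
  have nv: "nbrs G v = verts G - {v}"
  proof (rule card_subset_eq)
    show "finite (verts G - {v})" using fin by blast
    show "nbrs G v \<subseteq> verts G - {v}" using nbrs_subset[of G v] not_self_nbr[OF s, of v] by blast
    show "card (nbrs G v) = card (verts G - {v})" using dv v fin unfolding deg_def by simp
  qed
  have sm: "second_max_degree G = Max (deg G ` (verts G - {v}))"
    unfolding second_max_degree_def Let_def v_def ..
  have degb: "\<And>w. w \<in> verts G - {v} \<Longrightarrow> deg G w \<le> card (verts G) - 2"
  proof -
    fix w assume w: "w \<in> verts G - {v}"
    have "deg G w \<le> Max (deg G ` (verts G - {v}))" by (rule Max_ge, insert fin w, auto)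
    then show "deg G w \<le> card (verts G) - 2" using sm assms(5) by linarith
  qed
  have ne2: "verts G - {v} \<noteq> {}"
  proof
    assume "verts G - {v} = {}"
    then have "verts G \<subseteq> {v}" by blast
    then have "card (verts G) \<le> 1" using card_mono[of "{v}" "verts G"] by simp
    then show False using n by simp
  qed
  show ?thesis
  proof (rule signless_q_le[OF s ne])
    fix \<mu> assume ev: "Q_eigenvalue G \<mu>"
    show "\<mu> \<le> real (card (verts G)) + 2"
    proof (cases "\<exists>u\<in>verts G - {v}. 12 * deg G u \<ge> 11 * card (verts G)")
      case True
      then obtain u where u: "u \<in> verts G - {v}" "12 * deg G u \<ge> 11 * card (verts G)" by blast
      show ?thesis by (rule caseA[OF s v nv n degb F1 u ev])
    next
      case False
      then have small: "\<And>w. w \<in> verts G - {v} \<Longrightarrow> 12 * deg G w < 11 * card (verts G)"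
        by (meson not_le)
      show ?thesis by (rule caseB[OF s v nv n F1 small ne2 ev])
    qed
  qed
qed

end
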